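(* Fix a conditioning input $o$; all expectations below are conditional on $o$. Let $P_{\mathcal W}$ be an orthogonal projection on $\mathbb{R}^d$, $P_{\mathcal C}=I-P_{\mathcal W}$, and $d_{\mathcal W}=\operatorname{tr}(P_{\mathcal W})$. Let $A_1$ and $\mu$ be random vectors in $\mathbb{R}^d$ with finite second moments, let $\sigma>0$, and let $\Xi\sim\mathcal{N}(0,I_d)$ be independent of $(A_1,\mu)$ (conditionally on $o$). Define the WarmPrior source $$A_0=P_{\mathcal W}(\mu+\sigma\Xi)+P_{\mathcal C}\Xi,$$ and $A_t=(1-t)A_0+tA_1$ for $t\in[0,1]$. Define the warm-coordinate branching cost $$\mathcal{B}_{\mathcal W}(o)=\int_0^1\frac{1}{(1-t)^2}\,\mathbb{E}\Big[\big\|P_{\mathcal W}A_1-\mathbb{E}[P_{\mathcal W}A_1\mid A_t,o]\big\|_2^2\,\Big|\,o\Big]\,dt.$$ Then $$\mathcal{B}_{\mathcal W}(o)\le \mathbb{E}\big[\|P_{\mathcal W}(A_1-\mu)\|_2^2\,\big|\,o\big]+\sigma^2 d_{\mathcal W}.$$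
   Context: Action chunks are vectorized into $\mathbb{R}^d$; $o$ is the observation on which everything is conditioned. $P_{\mathcal W}$ projects onto the "warm" coordinates (where the prior is centered at the anchor mean $\mu$ with residual noise scale $\sigma$), and $P_{\mathcal C}$ onto the remaining "cold" coordinates (where the prior is standard Gaussian). $\|\cdot\|_2$ is the Euclidean norm. *)

theory Defs
  imports "HOL-Probability.Probability"
begin

definition orth_proj :: "real^'n^'n \<Rightarrow> bool" where
  "orth_proj P \<longleftrightarrow> P ** P = P \<and> transpose P = P"

definition warm_source ::
  "real^'n^'n \<Rightarrow> real \<Rightarrow> ('a \<Rightarrow> real^'n) \<Rightarrow> ('a \<Rightarrow> real^'n) \<Rightarrow> 'a \<Rightarrow> real^'n" where
  "warm_source P \<sigma> \<mu> \<Xi> \<omega> = P *v (\<mu> \<omega> + \<sigma> *\<^sub>R \<Xi> \<omega>) + (mat 1 - P) *v \<Xi> \<omega>"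

definition interp :: "('a \<Rightarrow> real^'n) \<Rightarrow> ('a \<Rightarrow> real^'n) \<Rightarrow> real \<Rightarrow> 'a \<Rightarrow> real^'n" where
  "interp A0 A1 t \<omega> = (1 - t) *\<^sub>R A0 \<omega> + t *\<^sub>R A1 \<omega>"

definition cond_exp_vec ::
  "'a measure \<Rightarrow> ('a \<Rightarrow> 'b::topological_space) \<Rightarrow> ('a \<Rightarrow> real^'n) \<Rightarrow> 'a \<Rightarrow> real^'n" where
  "cond_exp_vec M Y X \<omega> =
     (\<chi> i. real_cond_exp M (vimage_algebra (space M) Y borel) (\<lambda>\<eta>. X \<eta> $ i) \<omega>)"

definition branching_cost_W ::
  "'a measure \<Rightarrow> real^'n^'n \<Rightarrow> ('a \<Rightarrow> real^'n) \<Rightarrow> ('a \<Rightarrow> real^'n) \<Rightarrow> ennreal" where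
  "branching_cost_W M P A0 A1 =
     (\<integral>\<^sup>+ t. indicator {0..1} t *
        ennreal (1 / (1 - t)^2) *
        (\<integral>\<^sup>+ \<omega>. ennreal ((norm (P *v A1 \<omega> - cond_exp_vec M (interp A0 A1 t) (\<lambda>\<eta>. P *v A1 \<eta>) \<omega>))^2) \<partial>M)
      \<partial>lborel)"

end

theory Submission
  imports Defs
begin


lemma abs_prod_le_sq: "\<bar>(a::real) * b\<bar> \<le> a^2 + b^2"
proof -
  have "0 \<le> (\<bar>a\<bar> - \<bar>b\<bar>)^2" by simp
  also have "\<dots> = a^2 - 2 * (\<bar>a\<bar> * \<bar>b\<bar>) + b^2" by (simp add: power2_diff)
  finally show ?thesis using abs_mult[of a b] mult_nonneg_nonneg[of "\<bar>a\<bar>" "\<bar>b\<bar>"] by simp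
qed

lemma L2_prod_integrable:
  fixes f g :: "'a \<Rightarrow> real"
  assumes [measurable]: "f \<in> borel_measurable M" "g \<in> borel_measurable M"
    and "integrable M (\<lambda>x. (f x)^2)" "integrable M (\<lambda>x. (g x)^2)"
  shows "integrable M (\<lambda>x. f x * g x)"
proof (rule Bochner_Integration.integrable_bound[where f="\<lambda>x. (f x)^2 + (g x)^2"])
  show "integrable M (\<lambda>x. (f x)^2 + (g x)^2)" using assms by auto
  show "(\<lambda>x. f x * g x) \<in> borel_measurable M" by measurable
  show "AE x in M. norm (f x * g x) \<le> norm ((f x)^2 + (g x)^2)"
  proof (rule AE_I2)
    fix x
    have "\<bar>f x * g x\<bar> \<le> (f x)^2 + (g x)^2" by (rule abs_prod_le_sq)
    then show "norm (f x * g x) \<le> norm ((f x)^2 + (g x)^2)" by simp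
  qed
qed

lemma L2_diff:
  fixes f g :: "'a \<Rightarrow> real"
  assumes [measurable]: "f \<in> borel_measurable M" "g \<in> borel_measurable M"
    and "integrable M (\<lambda>x. (f x)^2)" "integrable M (\<lambda>x. (g x)^2)"
  shows "integrable M (\<lambda>x. (f x - g x)^2)"
proof (rule Bochner_Integration.integrable_bound[where f="\<lambda>x. 2 * (f x)^2 + 2 * (g x)^2"])
  show "integrable M (\<lambda>x. 2 * (f x)^2 + 2 * (g x)^2)" using assms by auto
  show "(\<lambda>x. (f x - g x)^2) \<in> borel_measurable M" by measurable
  show "AE x in M. norm ((f x - g x)^2) \<le> norm (2 * (f x)^2 + 2 * (g x)^2)"
  proof (rule AE_I2)
    fix x
    have "(f x - g x)^2 \<le> 2 * (f x)^2 + 2 * (g x)^2"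
      proof -
      have "0 \<le> (f x + g x)^2" by simp
      then show ?thesis by (simp add: power2_diff power2_sum)
    qed
    then show "norm ((f x - g x)^2) \<le> norm (2 * (f x)^2 + 2 * (g x)^2)" by simp
  qed
qed

lemma cond_exp_L2_opt:
  fixes X Y :: "'a \<Rightarrow> real"
  assumes "prob_space M" and "subalgebra M F"
    and [measurable]: "X \<in> borel_measurable M" and XI: "integrable M (\<lambda>x. (X x)^2)"
    and YF[measurable]: "Y \<in> borel_measurable F" and YI: "integrable M (\<lambda>x. (Y x)^2)"
  shows "(\<integral>\<^sup>+x. ennreal ((X x - real_cond_exp M F X x)^2) \<partial>M)
         \<le> (\<integral>\<^sup>+x. ennreal ((X x - Y x)^2) \<partial>M)"
proof -
  interpret prob_space M by fact
  interpret finite_measure_subalgebra M F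
    by unfold_locales (use assms(2) in auto)
  define C where "C = real_cond_exp M F X"
  have CF[measurable]: "C \<in> borel_measurable F" unfolding C_def by simp
  have CM[measurable]: "C \<in> borel_measurable M" by (rule measurable_from_subalg[OF subalg CF])
  have YM[measurable]: "Y \<in> borel_measurable M" by (rule measurable_from_subalg[OF subalg YF])
  have Xint: "integrable M X" by (rule square_integrable_imp_integrable) (use XI in auto)
  have jen: "AE x in M. (C x)^2 \<le> real_cond_exp M F (\<lambda>x. (X x)^2) x"
    unfolding C_def
    using real_cond_exp_jensens_inequality(2)[where I=UNIV and q=power2, OF Xint _ _ XI convex_power2]
    by auto
  have CI: "integrable M (\<lambda>x. (C x)^2)"
  proof (rule Bochner_Integration.integrable_bound[OF real_cond_exp_int(1)[OF XI]])
    show "(\<lambda>x. (C x)^2) \<in> borel_measurable M" by measurable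
    show "AE x in M. norm ((C x)\<^sup>2) \<le> norm (real_cond_exp M F (\<lambda>x. (X x)\<^sup>2) x)"
      using jen by eventually_elim auto
  qed
  have i1: "integrable M (\<lambda>x. (C x - Y x) * X x)"
    by (rule L2_prod_integrable) (auto simp: power2_diff intro!: Bochner_Integration.integrable_diff Bochner_Integration.integrable_add L2_prod_integrable CI YI XI)
  have eq: "(\<integral>x. (C x - Y x) * C x \<partial>M) = (\<integral>x. (C x - Y x) * X x \<partial>M)"
    unfolding C_def using real_cond_exp_intg(2)[of "\<lambda>x. C x - Y x" X] i1 by (simp add: C_def)
  have iXC: "integrable M (\<lambda>x. (X x - C x)^2)" by (rule L2_diff) (auto simp: XI CI)
  have iXY: "integrable M (\<lambda>x. (X x - Y x)^2)" by (rule L2_diff) (auto simp: XI YI)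
  have iCY: "integrable M (\<lambda>x. (C x - Y x)^2)" by (rule L2_diff) (auto simp: CI YI)
  have i2: "integrable M (\<lambda>x. (C x - Y x) * C x)" by (rule L2_prod_integrable) (auto simp: iCY CI)
  have pw: "(\<lambda>x. (X x - Y x)^2) = (\<lambda>x. (X x - C x)^2 + (C x - Y x)^2 + 2 * ((C x - Y x) * X x - (C x - Y x) * C x))"
    by (auto simp: power2_eq_square algebra_simps)
  have "(\<integral>x. (X x - Y x)^2 \<partial>M) = (\<integral>x. (X x - C x)^2 \<partial>M) + (\<integral>x. (C x - Y x)^2 \<partial>M) + 2 * ((\<integral>x. (C x - Y x) * X x \<partial>M) - (\<integral>x. (C x - Y x) * C x \<partial>M))"
    unfolding pw using iXC iCY i1 i2 by simp
  then have "(\<integral>x. (X x - C x)^2 \<partial>M) \<le> (\<integral>x. (X x - Y x)^2 \<partial>M)"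
    using eq by simp
  moreover have "(\<integral>\<^sup>+x. ennreal ((X x - C x)^2) \<partial>M) = ennreal (\<integral>x. (X x - C x)^2 \<partial>M)"
    by (rule nn_integral_eq_integral[OF iXC]) auto
  moreover have "(\<integral>\<^sup>+x. ennreal ((X x - Y x)^2) \<partial>M) = ennreal (\<integral>x. (X x - Y x)^2 \<partial>M)"
    by (rule nn_integral_eq_integral[OF iXY]) auto
  ultimately show ?thesis unfolding C_def by (simp add: ennreal_leI)
qed


lemma vec_nth_meas[measurable]:
  fixes f :: "'a \<Rightarrow> real^'n"
  assumes "f \<in> borel_measurable M"
  shows "(\<lambda>x. f x $ i) \<in> borel_measurable M"
  using borel_measurable_continuous_on[OF _ assms, of "\<lambda>v. v $ i"]
  by (simp add: continuous_on_component)

lemma norm_sq_vec: "(norm (v::real^'n))^2 = (\<Sum>i\<in>UNIV. (v$i)^2)"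
  unfolding norm_vec_def L2_set_def by (simp add: sum_nonneg)

lemma comp_sq_int:
  fixes f :: "'a \<Rightarrow> real^'n"
  assumes [measurable]: "f \<in> borel_measurable M" and "integrable M (\<lambda>x. (norm (f x))^2)"
  shows "integrable M (\<lambda>x. (f x $ i)^2)"
proof (rule Bochner_Integration.integrable_bound[OF assms(2)])
  show "(\<lambda>x. (f x $ i)^2) \<in> borel_measurable M" by measurable
  show "AE x in M. norm ((f x $ i)^2) \<le> norm ((norm (f x))^2)"
    using component_le_norm_cart[of "f _" i]
    by (intro AE_I2) (metis abs_ge_zero power2_abs power_mono real_norm_def norm_power norm_ge_zero abs_norm_cancel)
qed

lemma subalg_vimage:
  assumes "Z \<in> measurable M N"
  shows "subalgebra M (vimage_algebra (space M) Z N)"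
  unfolding subalgebra_def using sets_image_in_sets[OF refl assms] by simp

lemma cond_exp_vec_opt:
  fixes Xv Yv :: "'a \<Rightarrow> real^'n" and Z :: "'a \<Rightarrow> 'b::topological_space"
  assumes "prob_space M" and Z: "Z \<in> borel_measurable M"
    and [measurable]: "Xv \<in> borel_measurable M" and XI: "integrable M (\<lambda>x. (norm (Xv x))^2)"
    and YF: "Yv \<in> borel_measurable (vimage_algebra (space M) Z borel)"
    and YI: "integrable M (\<lambda>x. (norm (Yv x))^2)"
  shows "(\<integral>\<^sup>+x. ennreal ((norm (Xv x - cond_exp_vec M Z Xv x))^2) \<partial>M)
         \<le> (\<integral>\<^sup>+x. ennreal ((norm (Xv x - Yv x))^2) \<partial>M)"
proof -
  define F where "F = vimage_algebra (space M) Z borel"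
  have sub: "subalgebra M F" unfolding F_def by (rule subalg_vimage[OF Z])
  have YM[measurable]: "Yv \<in> borel_measurable M"
    using measurable_from_subalg[OF sub YF[folded F_def]] .
  have CM[measurable]: "(\<lambda>x. real_cond_exp M F (\<lambda>\<eta>. Xv \<eta> $ i) x) \<in> borel_measurable M" for i
  proof -
    interpret prob_space M by fact
    interpret finite_measure_subalgebra M F by unfold_locales (use sub in auto)
    show ?thesis by (rule measurable_from_subalg[OF subalg]) simp
  qed
  have "(\<integral>\<^sup>+x. ennreal ((norm (Xv x - cond_exp_vec M Z Xv x))^2) \<partial>M)
      = (\<integral>\<^sup>+x. (\<Sum>i\<in>UNIV. ennreal ((Xv x $ i - real_cond_exp M F (\<lambda>\<eta>. Xv \<eta> $ i) x)^2)) \<partial>M)"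
    by (simp add: norm_sq_vec cond_exp_vec_def F_def)
  also have "\<dots> = (\<Sum>i\<in>UNIV. (\<integral>\<^sup>+x. ennreal ((Xv x $ i - real_cond_exp M F (\<lambda>\<eta>. Xv \<eta> $ i) x)^2) \<partial>M))"
    by (rule nn_integral_sum) measurable
  also have "\<dots> \<le> (\<Sum>i\<in>UNIV. (\<integral>\<^sup>+x. ennreal ((Xv x $ i - Yv x $ i)^2) \<partial>M))"
  proof (rule sum_mono)
    fix i
    show "(\<integral>\<^sup>+x. ennreal ((Xv x $ i - real_cond_exp M F (\<lambda>\<eta>. Xv \<eta> $ i) x)^2) \<partial>M)
        \<le> (\<integral>\<^sup>+x. ennreal ((Xv x $ i - Yv x $ i)^2) \<partial>M)"
      by (rule cond_exp_L2_opt[OF assms(1) sub])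
         (auto intro: comp_sq_int XI YI vec_nth_meas YF[folded F_def])
  qed
  also have "\<dots> = (\<integral>\<^sup>+x. (\<Sum>i\<in>UNIV. ennreal ((Xv x $ i - Yv x $ i)^2)) \<partial>M)"
    by (rule nn_integral_sum[symmetric]) measurable
  also have "\<dots> = (\<integral>\<^sup>+x. ennreal ((norm (Xv x - Yv x))^2) \<partial>M)"
    by (simp add: norm_sq_vec)
  finally show ?thesis .
qed


lemma gauss_facts:
  fixes \<Xi> :: "'a \<Rightarrow> real^'n"
  assumes "prob_space M" and [measurable]: "\<Xi> \<in> borel_measurable M"
    and D: "\<And>i. distributed M lborel (\<lambda>\<omega>. \<Xi> \<omega> $ i) std_normal_density"
    and IND: "prob_space.indep_vars M (\<lambda>_. borel) (\<lambda>i \<omega>. \<Xi> \<omega> $ i) UNIV"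
  shows "integrable M (\<lambda>\<omega>. (\<Xi> \<omega> $ j)^2)"
    and "integrable M (\<lambda>\<omega>. \<Xi> \<omega> $ j)"
    and "(\<integral>\<omega>. \<Xi> \<omega> $ j \<partial>M) = 0"
    and "(\<integral>\<omega>. (\<Xi> \<omega> $ j)^2 \<partial>M) = 1"
    and "integrable M (\<lambda>\<omega>. \<Xi> \<omega> $ j * \<Xi> \<omega> $ k)"
    and "(\<integral>\<omega>. \<Xi> \<omega> $ j * \<Xi> \<omega> $ k \<partial>M) = (if j = k then 1 else 0)"
proof -
  interpret prob_space M by fact
  have sq: "integrable M (\<lambda>\<omega>. (\<Xi> \<omega> $ j)^2)" for j
    using distributed_integrable[OF D[of j], of "\<lambda>x. x^2"] integrable_std_normal_moment[of 2] by simp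
  show "integrable M (\<lambda>\<omega>. (\<Xi> \<omega> $ j)^2)" by (rule sq)
  have int: "integrable M (\<lambda>\<omega>. \<Xi> \<omega> $ j)" for j
    by (rule square_integrable_imp_integrable[OF _ sq]) measurable
  show "integrable M (\<lambda>\<omega>. \<Xi> \<omega> $ j)" by (rule int)
  have m0: "(\<integral>\<omega>. \<Xi> \<omega> $ j \<partial>M) = 0" for j
    by (rule standard_normal_distributed_expectation[OF D])
  show "(\<integral>\<omega>. \<Xi> \<omega> $ j \<partial>M) = 0" by (rule m0)
  have m2: "(\<integral>\<omega>. (\<Xi> \<omega> $ j)^2 \<partial>M) = 1" for j
    using distributed_integral[OF D[of j], of "\<lambda>x. x^2"] integral_std_normal_moment_even[of 1] by simp
  show "(\<integral>\<omega>. (\<Xi> \<omega> $ j)^2 \<partial>M) = 1" by (rule m2)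
  show "integrable M (\<lambda>\<omega>. \<Xi> \<omega> $ j * \<Xi> \<omega> $ k)"
    by (rule L2_prod_integrable) (auto intro: sq)
  show "(\<integral>\<omega>. \<Xi> \<omega> $ j * \<Xi> \<omega> $ k \<partial>M) = (if j = k then 1 else 0)"
  proof (cases "j = k")
    case True then show ?thesis using m2[of j] by (simp add: power2_eq_square)
  next
    case False
    have iv: "indep_vars (\<lambda>_. borel) (\<lambda>i \<omega>. \<Xi> \<omega> $ i) {j, k}"
      by (rule indep_vars_subset[OF IND]) auto
    have "(\<integral>\<omega>. (\<Prod>i\<in>{j,k}. \<Xi> \<omega> $ i) \<partial>M) = (\<Prod>i\<in>{j,k}. \<integral>\<omega>. \<Xi> \<omega> $ i \<partial>M)"
      by (rule indep_vars_lebesgue_integral[OF _ iv]) (auto intro: int)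
    then show ?thesis using False m0 by simp
  qed
qed

lemma trace_proj:
  fixes P :: "real^'n^'n"
  assumes "orth_proj P"
  shows "(\<Sum>i\<in>UNIV. \<Sum>j\<in>UNIV. P$i$j * P$i$j) = trace P"
proof -
  have PP: "P ** P = P" and PT: "transpose P = P" using assms by (auto simp: orth_proj_def)
  have sym: "P$k$i = P$i$k" for i k using arg_cong[OF PT, of "\<lambda>A. A$i$k"] by (simp add: transpose_def)
  have "trace P = (\<Sum>i\<in>UNIV. (P ** P)$i$i)" using PP by (simp add: trace_def)
  also have "\<dots> = (\<Sum>i\<in>UNIV. \<Sum>j\<in>UNIV. P$i$j * P$i$j)"
    by (simp add: matrix_matrix_mult_def sym)
  finally show ?thesis by simp
qed


lemma mv_comp: "(P *v x) $ i = (\<Sum>j\<in>UNIV. P$i$j * x$j)"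
  by (simp add: matrix_vector_mult_def)

lemma meas_comp1: "(\<lambda>v::real^'n. (P *v v) $ i) \<in> borel_measurable borel"
  unfolding mv_comp
  by (intro borel_measurable_continuous_onI continuous_intros)

lemma meas_comp2: "(\<lambda>p::(real^'n) \<times> (real^'n). (P *v (fst p - snd p)) $ i) \<in> borel_measurable borel"
  unfolding mv_comp
  by (intro borel_measurable_continuous_onI continuous_intros)


lemma gauss_proj:
  fixes \<Xi> :: "'a \<Rightarrow> real^'n" and P :: "real^'n^'n"
  assumes "prob_space M" and [measurable]: "\<Xi> \<in> borel_measurable M"
    and D: "\<And>i. distributed M lborel (\<lambda>\<omega>. \<Xi> \<omega> $ i) std_normal_density"
    and IND: "prob_space.indep_vars M (\<lambda>_. borel) (\<lambda>i \<omega>. \<Xi> \<omega> $ i) UNIV"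
    and OP: "orth_proj P"
  shows "integrable M (\<lambda>\<omega>. ((P *v \<Xi> \<omega>) $ i)^2)"
    and "(\<Sum>i\<in>UNIV. \<integral>\<omega>. ((P *v \<Xi> \<omega>) $ i)^2 \<partial>M) = trace P"
proof -
  note G = gauss_facts[OF assms(1-4)]
  have ex: "(\<lambda>\<omega>. ((P *v \<Xi> \<omega>) $ i)^2) = (\<lambda>\<omega>. \<Sum>j\<in>UNIV. \<Sum>k\<in>UNIV. P$i$j * P$i$k * (\<Xi> \<omega> $ j * \<Xi> \<omega> $ k))" for i
    by (auto simp: mv_comp power2_eq_square sum_product intro!: ext sum.cong) 
  show "integrable M (\<lambda>\<omega>. ((P *v \<Xi> \<omega>) $ i)^2)" for i
    unfolding ex by (intro Bochner_Integration.integrable_sum integrable_mult_right G(5))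
  have "(\<integral>\<omega>. ((P *v \<Xi> \<omega>) $ i)^2 \<partial>M) = (\<Sum>j\<in>UNIV. P$i$j * P$i$j)" for i
  proof -
    have "(\<integral>\<omega>. ((P *v \<Xi> \<omega>) $ i)^2 \<partial>M) = (\<Sum>j\<in>UNIV. \<Sum>k\<in>UNIV. P$i$j * P$i$k * (if j = k then 1 else 0))"
      unfolding ex
      by (simp add: Bochner_Integration.integral_sum integrable_mult_right G(5) G(6)
          Bochner_Integration.integrable_sum del: if_distrib)
    also have "\<dots> = (\<Sum>j\<in>UNIV. P$i$j * P$i$j)"
      by (simp add: if_distrib[of "\<lambda>x. _ * x"] cong: if_cong)
    finally show ?thesis .
  qed
  then show "(\<Sum>i\<in>UNIV. \<integral>\<omega>. ((P *v \<Xi> \<omega>) $ i)^2 \<partial>M) = trace P"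
    using trace_proj[OF OP] by simp
qed


lemma L2_add:
  fixes f g :: "'a \<Rightarrow> real"
  assumes [measurable]: "f \<in> borel_measurable M" "g \<in> borel_measurable M"
    and "integrable M (\<lambda>x. (f x)^2)" "integrable M (\<lambda>x. (g x)^2)"
  shows "integrable M (\<lambda>x. (f x + g x)^2)"
  using L2_diff[of f M "\<lambda>x. - g x"] assms by simp

lemma L2_cmult:
  fixes f :: "'a \<Rightarrow> real"
  assumes "integrable M (\<lambda>x. (f x)^2)"
  shows "integrable M (\<lambda>x. (c * f x)^2)"
  using integrable_mult_right[OF assms, of "c^2"] by (simp add: power_mult_distrib)

lemma L2_sum:
  fixes f :: "'i \<Rightarrow> 'a \<Rightarrow> real"
  assumes "finite I" and [measurable]: "\<And>i. i \<in> I \<Longrightarrow> f i \<in> borel_measurable M"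
    and "\<And>i. i \<in> I \<Longrightarrow> integrable M (\<lambda>x. (f i x)^2)"
  shows "integrable M (\<lambda>x. (\<Sum>i\<in>I. f i x)^2)"
  using assms
proof (induction I rule: finite_induct)
  case empty then show ?case by simp
next
  case (insert a I)
  have m: "(\<lambda>x. \<Sum>i\<in>I. f i x) \<in> borel_measurable M"
    using insert.prems(1) by (intro borel_measurable_sum) auto
  show ?case using insert L2_add[OF _ m, of "f a"] by simp
qed

lemma vimage_sub:
  fixes X :: "'a \<Rightarrow> 'b::topological_space" and g :: "'b \<Rightarrow> real"
  assumes g: "g \<in> borel_measurable borel"
  shows "{(\<lambda>\<omega>. g (X \<omega>)) -` A \<inter> space M | A. A \<in> sets (borel :: real measure)}
         \<subseteq> {X -` S \<inter> space M | S. S \<in> sets (borel :: 'b measure)}"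
proof
  fix B assume "B \<in> {(\<lambda>\<omega>. g (X \<omega>)) -` A \<inter> space M | A. A \<in> sets (borel :: real measure)}"
  then obtain A where A: "A \<in> sets (borel :: real measure)" and B: "B = (\<lambda>\<omega>. g (X \<omega>)) -` A \<inter> space M" by auto
  have "g -` A \<in> sets (borel :: 'b measure)" using measurable_sets[OF g A] by simp
  moreover have "B = X -` (g -` A) \<inter> space M" using B by auto
  ultimately show "B \<in> {X -` S \<inter> space M | S. S \<in> sets (borel :: 'b measure)}" by blast
qed

lemma IS_vimage: "Int_stable {X -` A \<inter> S | A. A \<in> sets N}"
  apply (auto simp: Int_stable_def)
  apply (rule_tac x="A \<inter> Aa" in exI)
  apply auto
  done

lemma indep_from_set:
  fixes \<Xi> :: "'a \<Rightarrow> 'b::topological_space" and W :: "'a \<Rightarrow> 'c::topological_space"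
    and g :: "'b \<Rightarrow> real" and h :: "'c \<Rightarrow> real"
  assumes "prob_space M" and [measurable]: "\<Xi> \<in> borel_measurable M" "W \<in> borel_measurable M"
    and [measurable]: "g \<in> borel_measurable borel" "h \<in> borel_measurable borel"
    and "prob_space.indep_set M
           {\<Xi> -` S \<inter> space M | S. S \<in> sets (borel :: 'b measure)}
           {W -` S \<inter> space M | S. S \<in> sets (borel :: 'c measure)}"
  shows "prob_space.indep_var M borel (\<lambda>\<omega>. g (\<Xi> \<omega>)) borel (\<lambda>\<omega>. h (W \<omega>))"
proof -
  interpret prob_space M by fact
  have S: "indep_set (sigma_sets (space M) {\<Xi> -` S \<inter> space M | S. S \<in> sets (borel :: 'b measure)})
                     (sigma_sets (space M) {W -` S \<inter> space M | S. S \<in> sets (borel :: 'c measure)})"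
    by (rule indep_set_sigma_sets[OF assms(6) IS_vimage IS_vimage])
  show ?thesis
    unfolding indep_var_eq
  proof (intro conjI)
    show "random_variable borel (\<lambda>\<omega>. g (\<Xi> \<omega>))" "random_variable borel (\<lambda>\<omega>. h (W \<omega>))" by (auto intro!: measurable_compose[OF assms(2) assms(4)] measurable_compose[OF assms(3) assms(5)] simp del: sets_borel)
    show "indep_set (sigma_sets (space M) {(\<lambda>\<omega>. g (\<Xi> \<omega>)) -` A \<inter> space M |A. A \<in> sets borel})
      (sigma_sets (space M) {(\<lambda>\<omega>. h (W \<omega>)) -` A \<inter> space M |A. A \<in> sets borel})"
      unfolding indep_set_def
      by (rule indep_sets_mono_sets[OF S[unfolded indep_set_def]])
         (auto split: bool.split intro!: sigma_sets_mono' vimage_sub simp del: sets_borel)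
  qed
qed



definition vL2 :: "'a measure \<Rightarrow> ('a \<Rightarrow> real^'n) \<Rightarrow> bool" where
  "vL2 M f \<longleftrightarrow> f \<in> borel_measurable M \<and> (\<forall>i. integrable M (\<lambda>x. (f x $ i)^2))"

lemma vL2_norm: "vL2 M f \<Longrightarrow> integrable M (\<lambda>x. (norm (f x))^2)"
  unfolding vL2_def norm_sq_vec by (auto intro!: Bochner_Integration.integrable_sum)

lemma vL2_I: "f \<in> borel_measurable M \<Longrightarrow> integrable M (\<lambda>x. (norm (f x))^2) \<Longrightarrow> vL2 M f"
  unfolding vL2_def by (auto intro: comp_sq_int)

lemma vL2_meas: "vL2 M f \<Longrightarrow> f \<in> borel_measurable M"
  unfolding vL2_def by auto

lemma vL2_add: "vL2 M f \<Longrightarrow> vL2 M g \<Longrightarrow> vL2 M (\<lambda>x. f x + g x)"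
  unfolding vL2_def by (auto intro!: L2_add)

lemma vL2_diff: "vL2 M f \<Longrightarrow> vL2 M g \<Longrightarrow> vL2 M (\<lambda>x. f x - g x)"
  unfolding vL2_def by (auto intro!: L2_diff)

lemma vL2_scale: "vL2 M f \<Longrightarrow> vL2 M (\<lambda>x. c *\<^sub>R f x)"
  unfolding vL2_def by (auto intro!: L2_cmult)

lemma mv_meas: "(\<lambda>v::real^'n. P *v v) \<in> borel_measurable borel"
  by (intro borel_measurable_continuous_onI linear_continuous_on matrix_vector_mul_bounded_linear)

lemma vL2_mv: "vL2 M f \<Longrightarrow> vL2 M (\<lambda>x. P *v f x)"
  unfolding vL2_def
proof (intro conjI allI; elim conjE)
  assume f[measurable]: "f \<in> borel_measurable M" and I: "\<forall>i. integrable M (\<lambda>x. (f x $ i)\<^sup>2)"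
  show "(\<lambda>x. P *v f x) \<in> borel_measurable M" using measurable_comp[OF f mv_meas] by (simp add: comp_def)
  fix i show "integrable M (\<lambda>x. ((P *v f x) $ i)\<^sup>2)"
    unfolding mv_comp by (rule L2_sum) (auto intro!: L2_cmult simp: I)
qed



lemma main_expect:
  fixes M :: "'a measure" and P :: "real^'n^'n" and A1 \<mu> \<Xi> :: "'a \<Rightarrow> real^'n" and \<sigma> :: real
  assumes PS: "prob_space M" and OP: "orth_proj P"
    and [measurable]: "A1 \<in> borel_measurable M" "\<mu> \<in> borel_measurable M" "\<Xi> \<in> borel_measurable M"
    and LA: "vL2 M A1" and Lmu: "vL2 M \<mu>"
    and D: "\<And>i. distributed M lborel (\<lambda>\<omega>. \<Xi> \<omega> $ i) std_normal_density"
    and IND: "prob_space.indep_vars M (\<lambda>_. borel) (\<lambda>i \<omega>. \<Xi> \<omega> $ i) UNIV"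
    and INDS: "prob_space.indep_set M
           {\<Xi> -` S \<inter> space M | S. S \<in> sets (borel :: (real^'n) measure)}
           {(\<lambda>\<omega>. (A1 \<omega>, \<mu> \<omega>)) -` S \<inter> space M | S. S \<in> sets (borel :: ((real^'n) \<times> (real^'n)) measure)}"
  shows "(\<integral>\<^sup>+\<omega>. ennreal ((norm (P *v (A1 \<omega> - \<mu> \<omega>) - \<sigma> *\<^sub>R (P *v \<Xi> \<omega>)))^2) \<partial>M)
       = (\<integral>\<^sup>+\<omega>. ennreal ((norm (P *v (A1 \<omega> - \<mu> \<omega>)))^2) \<partial>M) + ennreal (\<sigma>^2 * trace P)"
proof -
  interpret prob_space M by fact
  note G = gauss_facts[OF PS assms(5) D IND]
  note GP = gauss_proj[OF PS assms(5) D IND OP]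
  define Dv where "Dv \<omega> = P *v (A1 \<omega> - \<mu> \<omega>)" for \<omega>
  define Zv where "Zv \<omega> = P *v \<Xi> \<omega>" for \<omega>
  have LXi: "vL2 M \<Xi>" unfolding vL2_def using G(1) by auto
  have LD: "vL2 M Dv" unfolding Dv_def by (intro vL2_mv vL2_diff LA Lmu)
  have LZ: "vL2 M Zv" unfolding Zv_def by (intro vL2_mv LXi)
  have LDZ: "vL2 M (\<lambda>\<omega>. Dv \<omega> - \<sigma> *\<^sub>R Zv \<omega>)" by (intro vL2_diff vL2_scale LD LZ)
  have Dm: "Dv \<in> borel_measurable M" and Zm: "Zv \<in> borel_measurable M"
    using LD LZ by (auto simp: vL2_def)
  have Di2: "integrable M (\<lambda>\<omega>. (Dv \<omega> $ i)^2)" for i using LD by (auto simp: vL2_def)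
  have Zi2: "integrable M (\<lambda>\<omega>. (Zv \<omega> $ i)^2)" for i using LZ by (auto simp: vL2_def)
  have Di: "integrable M (\<lambda>\<omega>. Dv \<omega> $ i)" for i
    by (rule square_integrable_imp_integrable[OF vec_nth_meas[OF Dm] Di2])
  have Zi: "integrable M (\<lambda>\<omega>. Zv \<omega> $ i)" for i
    by (rule square_integrable_imp_integrable[OF vec_nth_meas[OF Zm] Zi2])
  have ZDi: "integrable M (\<lambda>\<omega>. Zv \<omega> $ i * Dv \<omega> $ i)" for i
    by (rule L2_prod_integrable[OF vec_nth_meas[OF Zm] vec_nth_meas[OF Dm] Zi2 Di2])
  have EZ: "(\<integral>\<omega>. Zv \<omega> $ i \<partial>M) = 0" for i
    unfolding Zv_def mv_comp
    by (simp add: Bochner_Integration.integral_sum integrable_mult_right G(2) G(3))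
  have cross: "(\<integral>\<omega>. Zv \<omega> $ i * Dv \<omega> $ i \<partial>M) = 0" for i
  proof -
    have iv: "indep_var borel (\<lambda>\<omega>. (P *v \<Xi> \<omega>) $ i) borel
        (\<lambda>\<omega>. (P *v (fst (A1 \<omega>, \<mu> \<omega>) - snd (A1 \<omega>, \<mu> \<omega>))) $ i)"
      by (rule indep_from_set[OF PS assms(5) borel_measurable_Pair[OF assms(3,4)] meas_comp1 meas_comp2 INDS])
    then have iv': "indep_var borel (\<lambda>\<omega>. Zv \<omega> $ i) borel (\<lambda>\<omega>. Dv \<omega> $ i)"
      by (simp add: Zv_def Dv_def)
    show ?thesis using indep_var_lebesgue_integral[OF iv' Zi Di] EZ by simp
  qed
  have pw: "(\<lambda>\<omega>. (Dv \<omega> $ i - \<sigma> * Zv \<omega> $ i)^2) = (\<lambda>\<omega>. (Dv \<omega> $ i)^2 + \<sigma>^2 * (Zv \<omega> $ i)^2 - 2 * \<sigma> * (Zv \<omega> $ i * Dv \<omega> $ i))" for i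
    by (auto simp: power2_eq_square algebra_simps)
  have comp: "(\<integral>\<omega>. (Dv \<omega> $ i - \<sigma> * Zv \<omega> $ i)^2 \<partial>M) = (\<integral>\<omega>. (Dv \<omega> $ i)^2 \<partial>M) + \<sigma>^2 * (\<integral>\<omega>. (Zv \<omega> $ i)^2 \<partial>M)" for i
    unfolding pw using Di2[of i] Zi2[of i] ZDi[of i] cross[of i] by simp
  have "(\<integral>\<omega>. (norm (Dv \<omega> - \<sigma> *\<^sub>R Zv \<omega>))^2 \<partial>M) = (\<Sum>i\<in>UNIV. \<integral>\<omega>. (Dv \<omega> $ i - \<sigma> * Zv \<omega> $ i)^2 \<partial>M)"
  proof -
    have DZi: "integrable M (\<lambda>\<omega>. (Dv \<omega> $ i - \<sigma> * Zv \<omega> $ i)^2)" for i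
      using LDZ unfolding vL2_def by simp
    have e: "(\<lambda>\<omega>. (norm (Dv \<omega> - \<sigma> *\<^sub>R Zv \<omega>))^2) = (\<lambda>\<omega>. \<Sum>i\<in>UNIV. (Dv \<omega> $ i - \<sigma> * Zv \<omega> $ i)^2)"
      by (simp add: norm_sq_vec)
    show ?thesis unfolding e by (rule Bochner_Integration.integral_sum[OF DZi])
  qed
  also have "\<dots> = (\<Sum>i\<in>UNIV. \<integral>\<omega>. (Dv \<omega> $ i)^2 \<partial>M) + \<sigma>^2 * (\<Sum>i\<in>UNIV. \<integral>\<omega>. (Zv \<omega> $ i)^2 \<partial>M)"
    by (simp add: comp sum.distrib sum_distrib_left)
  also have "(\<Sum>i\<in>UNIV. \<integral>\<omega>. (Zv \<omega> $ i)^2 \<partial>M) = trace P" using GP(2) by (simp add: Zv_def)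
  also have "(\<Sum>i\<in>UNIV. \<integral>\<omega>. (Dv \<omega> $ i)^2 \<partial>M) = (\<integral>\<omega>. (norm (Dv \<omega>))^2 \<partial>M)"
  proof -
    have e: "(\<lambda>\<omega>. (norm (Dv \<omega>))^2) = (\<lambda>\<omega>. \<Sum>i\<in>UNIV. (Dv \<omega> $ i)^2)"
      by (simp add: norm_sq_vec)
    show ?thesis unfolding e by (rule Bochner_Integration.integral_sum[OF Di2, symmetric])
  qed
  finally have R: "(\<integral>\<omega>. (norm (Dv \<omega> - \<sigma> *\<^sub>R Zv \<omega>))^2 \<partial>M) = (\<integral>\<omega>. (norm (Dv \<omega>))^2 \<partial>M) + \<sigma>^2 * trace P" .
  have trnn: "0 \<le> trace P"
  proof -
    have "0 \<le> (\<Sum>i\<in>UNIV. \<Sum>j\<in>UNIV. P$i$j * P$i$j)" by (intro sum_nonneg) simp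
    then show ?thesis using trace_proj[OF OP] by simp
  qed
  have "(\<integral>\<^sup>+\<omega>. ennreal ((norm (Dv \<omega> - \<sigma> *\<^sub>R Zv \<omega>))^2) \<partial>M) = ennreal (\<integral>\<omega>. (norm (Dv \<omega> - \<sigma> *\<^sub>R Zv \<omega>))^2 \<partial>M)"
    by (rule nn_integral_eq_integral[OF vL2_norm[OF LDZ]]) (intro AE_I2, simp)
  also have "\<dots> = ennreal (\<integral>\<omega>. (norm (Dv \<omega>))^2 \<partial>M) + ennreal (\<sigma>^2 * trace P)"
    unfolding R by (rule ennreal_plus) (simp_all add: trnn integral_nonneg)
  also have "ennreal (\<integral>\<omega>. (norm (Dv \<omega>))^2 \<partial>M) = (\<integral>\<^sup>+\<omega>. ennreal ((norm (Dv \<omega>))^2) \<partial>M)"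
    by (rule nn_integral_eq_integral[OF vL2_norm[OF LD], symmetric]) (intro AE_I2, simp)
  finally show ?thesis by (simp add: Dv_def Zv_def)
qed


lemma vec_ident:
  fixes P :: "real^'n^'n"
  assumes PP: "P ** P = P"
  shows "P *v a1 - P *v ((1-t) *\<^sub>R (P *v (m + s *\<^sub>R x) + (mat 1 - P) *v x) + t *\<^sub>R a1)
       = (1-t) *\<^sub>R (P *v (a1 - m) - s *\<^sub>R (P *v x))"
proof -
  have h1: "P *v (P *v v) = P *v v" for v by (simp add: matrix_vector_mul_assoc PP)
  have h2: "P *v ((mat 1 - P) *v x) = 0"
    by (simp add: matrix_vector_mult_diff_rdistrib matrix_vector_mult_diff_distrib h1)
  have "P *v ((1-t) *\<^sub>R (P *v (m + s *\<^sub>R x) + (mat 1 - P) *v x) + t *\<^sub>R a1)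
      = (1-t) *\<^sub>R (P *v m + s *\<^sub>R (P *v x)) + t *\<^sub>R (P *v a1)"
    by (simp add: matrix_vector_right_distrib matrix_vector_mult_scaleR h1 h2)
  then show ?thesis
    by (simp add: matrix_vector_mult_diff_distrib algebra_simps)
qed


theorem propositionB2:
  fixes M :: "'a measure"
    and P :: "real^'n^'n"
    and A1 \<mu> \<Xi> :: "'a \<Rightarrow> real^'n"
    and \<sigma> :: real
  assumes "prob_space M"
    and "orth_proj P"
    and "A1 \<in> borel_measurable M" and "\<mu> \<in> borel_measurable M" and "\<Xi> \<in> borel_measurable M"
    and "integrable M (\<lambda>\<omega>. (norm (A1 \<omega>))^2)"
    and "integrable M (\<lambda>\<omega>. (norm (\<mu> \<omega>))^2)"
    and "\<sigma> > 0"
    and "\<And>i. distributed M lborel (\<lambda>\<omega>. \<Xi> \<omega> $ i) std_normal_density"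
    and "prob_space.indep_vars M (\<lambda>_. borel) (\<lambda>i \<omega>. \<Xi> \<omega> $ i) UNIV"
    and "prob_space.indep_set M
           {\<Xi> -` S \<inter> space M | S. S \<in> sets (borel :: (real^'n) measure)}
           {(\<lambda>\<omega>. (A1 \<omega>, \<mu> \<omega>)) -` S \<inter> space M | S. S \<in> sets (borel :: ((real^'n) \<times> (real^'n)) measure)}"
  shows "branching_cost_W M P (warm_source P \<sigma> \<mu> \<Xi>) A1
           \<le> (\<integral>\<^sup>+ \<omega>. ennreal ((norm (P *v (A1 \<omega> - \<mu> \<omega>)))^2) \<partial>M)
              + ennreal (\<sigma>^2 * trace P)"
proof -
  interpret prob_space M by fact
  note G = gauss_facts[OF assms(1,5,9,10)]
  have LA: "vL2 M A1" by (rule vL2_I[OF assms(3,6)])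
  have Lmu: "vL2 M \<mu>" by (rule vL2_I[OF assms(4,7)])
  have LXi: "vL2 M \<Xi>" unfolding vL2_def using G(1) assms(5) by auto
  note ME = main_expect[OF assms(1,2,3,4,5) LA Lmu assms(9,10,11), of \<sigma>]
  define A0 where "A0 = warm_source P \<sigma> \<mu> \<Xi>"
  define R where "R = (\<integral>\<^sup>+ \<omega>. ennreal ((norm (P *v (A1 \<omega> - \<mu> \<omega>)))^2) \<partial>M) + ennreal (\<sigma>^2 * trace P)"
  have PP: "P ** P = P" using assms(2) by (simp add: orth_proj_def)
  have LA0: "vL2 M A0"
    unfolding A0_def warm_source_def[abs_def]
    by (intro vL2_add vL2_mv vL2_scale LXi Lmu vL2_I)
  have pt: "indicator {0..1} t * ennreal (1 / (1 - t)^2) *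
        (\<integral>\<^sup>+ \<omega>. ennreal ((norm (P *v A1 \<omega> - cond_exp_vec M (interp A0 A1 t) (\<lambda>\<eta>. P *v A1 \<eta>) \<omega>))^2) \<partial>M)
      \<le> indicator {0..1} t * R" for t :: real
  proof (cases "t \<in> {0..<1}")
    case False
    then have "t \<notin> {0..1} \<or> t = 1" by auto
    then show ?thesis by auto
  next
    case True
    then have t1: "t < 1" and t0: "0 \<le> t" by auto
    define Z where "Z = interp A0 A1 t"
    have LZ: "vL2 M Z" unfolding Z_def interp_def[abs_def]
      by (intro vL2_add vL2_scale LA0 LA)
    have Zm: "Z \<in> borel_measurable M" using LZ by (rule vL2_meas)
    have YF: "(\<lambda>\<omega>. P *v Z \<omega>) \<in> borel_measurable (vimage_algebra (space M) Z borel)"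
      using measurable_comp[OF measurable_vimage_algebra1[of Z "space M" borel] mv_meas[of P]]
      by (simp add: comp_def)
    have opt: "(\<integral>\<^sup>+ \<omega>. ennreal ((norm (P *v A1 \<omega> - cond_exp_vec M Z (\<lambda>\<eta>. P *v A1 \<eta>) \<omega>))^2) \<partial>M)
        \<le> (\<integral>\<^sup>+ \<omega>. ennreal ((norm (P *v A1 \<omega> - P *v Z \<omega>))^2) \<partial>M)"
      by (rule cond_exp_vec_opt[OF assms(1) Zm vL2_meas[OF vL2_mv[OF LA]] vL2_norm[OF vL2_mv[OF LA]] YF
            vL2_norm[OF vL2_mv[OF LZ]]])
    have id: "P *v A1 \<omega> - P *v Z \<omega> = (1-t) *\<^sub>R (P *v (A1 \<omega> - \<mu> \<omega>) - \<sigma> *\<^sub>R (P *v \<Xi> \<omega>))" for \<omega>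
      unfolding Z_def interp_def A0_def warm_source_def by (rule vec_ident[OF PP])
    have "(\<integral>\<^sup>+ \<omega>. ennreal ((norm (P *v A1 \<omega> - P *v Z \<omega>))^2) \<partial>M)
        = (\<integral>\<^sup>+ \<omega>. ennreal ((1-t)^2) * ennreal ((norm (P *v (A1 \<omega> - \<mu> \<omega>) - \<sigma> *\<^sub>R (P *v \<Xi> \<omega>)))^2) \<partial>M)"
      unfolding id using t1 by (simp add: power_mult_distrib ennreal_mult')
    also have "\<dots> = ennreal ((1-t)^2) * R"
    proof -
      have L: "vL2 M (\<lambda>\<omega>. P *v (A1 \<omega> - \<mu> \<omega>) - \<sigma> *\<^sub>R (P *v \<Xi> \<omega>))"
        by (intro vL2_diff vL2_scale vL2_mv LA Lmu LXi)
      have nm: "(\<lambda>v::real^'n. (norm v)^2) \<in> borel_measurable borel"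
        by (intro borel_measurable_continuous_onI continuous_intros)
      have "(\<lambda>\<omega>. (norm (P *v (A1 \<omega> - \<mu> \<omega>) - \<sigma> *\<^sub>R (P *v \<Xi> \<omega>)))^2) \<in> borel_measurable M"
        using measurable_comp[OF vL2_meas[OF L] nm] by (simp add: comp_def)
      then show ?thesis
        unfolding R_def ME[symmetric] by (rule nn_integral_cmult[OF measurable_compose[OF _ measurable_ennreal]])
    qed
    finally have eqR: "(\<integral>\<^sup>+ \<omega>. ennreal ((norm (P *v A1 \<omega> - P *v Z \<omega>))^2) \<partial>M) = ennreal ((1-t)^2) * R" .
    have "ennreal (1 / (1 - t)^2) * (\<integral>\<^sup>+ \<omega>. ennreal ((norm (P *v A1 \<omega> - cond_exp_vec M Z (\<lambda>\<eta>. P *v A1 \<eta>) \<omega>))^2) \<partial>M)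
        \<le> ennreal (1 / (1 - t)^2) * (ennreal ((1-t)^2) * R)"
      using opt eqR by (simp add: mult_left_mono)
    also have "\<dots> = R"
      using t1 by (simp add: ennreal_mult'[symmetric] mult.assoc[symmetric])
    finally show ?thesis using True by (simp add: Z_def mult.assoc)
  qed
  have "branching_cost_W M P A0 A1 \<le> (\<integral>\<^sup>+ t. indicator {0..1::real} t * R \<partial>lborel)"
    unfolding branching_cost_W_def
    apply (rule nn_integral_mono)
    apply (rule pt)
    done
  also have "\<dots> = R" by (simp add: nn_integral_cmult_indicator mult.commute)
  finally show ?thesis unfolding A0_def R_def .
qed
end
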